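(* Let $Q=[(n,q),(\hat n,\hat q)]$ be a pointed irregular type with $q,\hat q$ compatible, and let $k=f_{q,\hat q}$. A list $Q'$ of pairs satisfies $Q'\sim Q$ if and only if $Q'=[(n,q'),(\hat n,\hat q')]$ where $q',\hat q'$ are compatible exponential factors in distinct Galois orbits such that (1) $\mathrm{Levels}(q')=\mathrm{Levels}(q)$ and $\mathrm{Levels}(\hat q')=\mathrm{Levels}(\hat q)$; (2) the common parts satisfy $\mathrm{Levels}(q'_c)=\mathrm{Levels}(q_c)$; (3) $f_{q',\hat q'}=k$. Moreover, (1)–(3) hold if and only if $\mathrm{Levels}(q')=\mathrm{Levels}(q)$, $\mathrm{Levels}(\hat q')=\mathrm{Levels}(\hat q)$ and $f_{q',\hat q'}=k$.
   Context: Exponential factors: finite sums $q=\sum_ka_kx^k$, $a_k\in\mathbb C$, $k\in\mathbb Q_{>0}$; $E(q)$ = set of exponents with $a_k\ne0$; $\mathrm{slope}(q)=\max E(q)$ ($0$ if $q=0$); $\mathrm{ram}(q)$ = least $r\ge1$ with $q\in x^{1/r}\mathbb C[x^{1/r}]$. Galois operator $\sigma(\sum a_kx^k)=\sum a_ke^{-2\pi\sqrt{-1}k}x^k$; Stokes circle $\langle q\rangle=\{\sigma^i(q)\}$. Truncation $\tau_k(\sum a_{k'}x^{k'})=\sum_{k'\ge k}a_{k'}x^{k'}$. $\mathrm{Levels}(q)=\{\mathrm{slope}(q-\sigma^i(q)):i\in\mathbb Z\}\setminus\{0\}$. Common part/fission exponent: for $q,\hat q$ in distinct orbits, if some $k\in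 E(q)$ has $\langle\tau_k(q)\rangle=\langle\tau_k(\hat q)\rangle$, let $k$ be the smallest, $q_c=\tau_k(q)$, $\hat q_c=\tau_k(\hat q)$; else $q_c=\hat q_c=0$. $f_{q,\hat q}=\max(\mathrm{slope}(q-q_c),\mathrm{slope}(\hat q-\hat q_c))$. Compatible means $q_c=\hat q_c$. A pointed irregular type is $[(n_1,q_1),\dots,(n_m,q_m)]$, $n_i\in\mathbb N_{>0}$, $q_i$ in pairwise distinct Galois orbits. For a list $Q'=[(n'_1,q'_1),\dots,(n'_p,q'_p)]$ ($n'_i\in\mathbb N_{>0}$, $q'_i$ exponential factors), $Q'\sim Q$ means $p=m$, $n'_i=n_i$, and $\mathrm{slope}(\sigma^k(q'_i)-\sigma^l(q'_j))=\mathrm{slope}(\sigma^k(q_i)-\sigma^l(q_j))$ for all $1\le i,j\le m$, $0\le k\le\mathrm{ram}(q_i)$, $0\le l\le\mathrm{ram}(q_j)$. *)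

theory Defs
  imports Complex_Main
begin

text \<open>An exponential factor sum a_k x^k is represented by its coefficient function
  rat => complex (k |-> a_k); it must have finite support contained in the positive rationals.\<close>

type_synonym efac = "rat \<Rightarrow> complex"

definition expos :: "efac \<Rightarrow> rat set" where
  "expos q = {k. q k \<noteq> 0}"

definition is_efac :: "efac \<Rightarrow> bool" where
  "is_efac q \<longleftrightarrow> finite (expos q) \<and> (\<forall>k\<in>expos q. k > 0)"

definition slope :: "efac \<Rightarrow> rat" where
  "slope q = (if expos q = {} then 0 else Max (expos q))"

definition ram :: "efac \<Rightarrow> nat" where
  "ram q = (LEAST r::nat. r \<ge> 1 \<and> (\<forall>k\<in>expos q. \<exists>m::int. k * of_nat r = of_int m))"

definition sigma :: "efac \<Rightarrow> efac" where
  "sigma q = (\<lambda>k. cis (- 2 * pi * real_of_rat k) * q k)"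

definition sigma_pow :: "int \<Rightarrow> efac \<Rightarrow> efac" where
  "sigma_pow i q = (if i \<ge> 0 then (sigma ^^ nat i) q else ((inv sigma) ^^ nat (- i)) q)"

definition stokes :: "efac \<Rightarrow> efac set" where
  "stokes q = {sigma_pow i q | i. True}"

definition trunc :: "rat \<Rightarrow> efac \<Rightarrow> efac" where
  "trunc k q = (\<lambda>k'. if k' \<ge> k then q k' else 0)"

definition levels :: "efac \<Rightarrow> rat set" where
  "levels q = {slope (q - sigma_pow i q) | i. True} - {0}"

definition common_exists :: "efac \<Rightarrow> efac \<Rightarrow> bool" where
  "common_exists q qh \<longleftrightarrow> (\<exists>k\<in>expos q. stokes (trunc k q) = stokes (trunc k qh))"

definition common_exp :: "efac \<Rightarrow> efac \<Rightarrow> rat" where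
  "common_exp q qh = (LEAST k. k \<in> expos q \<and> stokes (trunc k q) = stokes (trunc k qh))"

definition common_part :: "efac \<Rightarrow> efac \<Rightarrow> efac \<times> efac" where
  "common_part q qh = (if common_exists q qh
     then (trunc (common_exp q qh) q, trunc (common_exp q qh) qh) else ((\<lambda>_. 0), (\<lambda>_. 0)))"

definition fission :: "efac \<Rightarrow> efac \<Rightarrow> rat" where
  "fission q qh = max (slope (q - fst (common_part q qh))) (slope (qh - snd (common_part q qh)))"

definition compatible :: "efac \<Rightarrow> efac \<Rightarrow> bool" where
  "compatible q qh \<longleftrightarrow> fst (common_part q qh) = snd (common_part q qh)"

definition distinct_orbits :: "efac \<Rightarrow> efac \<Rightarrow> bool" where
  "distinct_orbits q qh \<longleftrightarrow> stokes q \<noteq> stokes qh"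

definition wf_list :: "(nat \<times> efac) list \<Rightarrow> bool" where
  "wf_list Q \<longleftrightarrow> (\<forall>p\<in>set Q. fst p > 0 \<and> is_efac (snd p))"

definition pointed_irr_type :: "(nat \<times> efac) list \<Rightarrow> bool" where
  "pointed_irr_type Q \<longleftrightarrow> wf_list Q \<and>
     (\<forall>i<length Q. \<forall>j<length Q. i \<noteq> j \<longrightarrow> distinct_orbits (snd (Q!i)) (snd (Q!j)))"

definition irr_equiv :: "(nat \<times> efac) list \<Rightarrow> (nat \<times> efac) list \<Rightarrow> bool" where
  "irr_equiv Q' Q \<longleftrightarrow> length Q' = length Q \<and>
     (\<forall>i<length Q. fst (Q'!i) = fst (Q!i)) \<and>
     (\<forall>i<length Q. \<forall>j<length Q. \<forall>k\<le>ram (snd (Q!i)). \<forall>l\<le>ram (snd (Q!j)).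
        slope (sigma_pow (int k) (snd (Q'!i)) - sigma_pow (int l) (snd (Q'!j)))
          = slope (sigma_pow (int k) (snd (Q!i)) - sigma_pow (int l) (snd (Q!j))))"

end

theory Submission
  imports Defs
begin


definition w :: "int \<Rightarrow> rat \<Rightarrow> complex" where
  "w j m = cis (- 2 * pi * real_of_rat m * of_int j)"

lemma w_add: "w (a + b) m = w a m * w b m"
  unfolding w_def by (simp add: cis_mult algebra_simps)

lemma w_0[simp]: "w 0 m = 1" unfolding w_def by simp

lemma w_nz[simp]: "w j m \<noteq> 0" unfolding w_def by simp

lemma sigma_eq: "sigma q = (\<lambda>m. w 1 m * q m)"
  unfolding sigma_def w_def by simp

lemma sigma_iter: "(sigma ^^ n) q = (\<lambda>m. w (int n) m * q m)"
proof (induction n)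
  case 0 then show ?case by simp
next
  case (Suc n)
  have "(sigma ^^ Suc n) q = sigma ((sigma ^^ n) q)" by simp
  also have "\<dots> = (\<lambda>m. w 1 m * (w (int n) m * q m))" by (simp only: Suc sigma_eq)
  also have "\<dots> = (\<lambda>m. w (int (Suc n)) m * q m)"
    by (rule ext) (simp only: of_nat_Suc add.commute[of "int n" 1] w_add mult.assoc)
  finally show ?case .
qed

lemma inv_sigma: "inv sigma = (\<lambda>q m. w (-1) m * q m)"
proof (rule inv_equality)
  fix x show "(\<lambda>m. w (-1) m * sigma x m) = x"
    by (rule ext) (simp only: sigma_eq mult.assoc[symmetric] w_add[symmetric], simp)
next
  fix y show "sigma (\<lambda>m. w (-1) m * y m) = y"
    by (rule ext) (simp only: sigma_eq mult.assoc[symmetric] w_add[symmetric], simp)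
qed

lemma inv_sigma_iter: "(inv sigma ^^ n) q = (\<lambda>m. w (- int n) m * q m)"
proof (induction n)
  case 0 then show ?case by simp
next
  case (Suc n)
  have "(inv sigma ^^ Suc n) q = inv sigma ((inv sigma ^^ n) q)" by simp
  also have "\<dots> = (\<lambda>m. w (-1) m * (w (- int n) m * q m))" by (simp only: Suc) (simp only: inv_sigma)
  also have "\<dots> = (\<lambda>m. w (- int (Suc n)) m * q m)"
    by (rule ext) (simp only: mult.assoc[symmetric] w_add[symmetric], simp)
  finally show ?case .
qed

lemma sp: "sigma_pow j q = (\<lambda>m. w j m * q m)"
  unfolding sigma_pow_def by (simp add: sigma_iter inv_sigma_iter)

lemma sp_apply: "sigma_pow j q m = w j m * q m" by (simp add: sp)

lemma sp_0[simp]: "sigma_pow 0 q = q" by (simp add: sp)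

lemma sp_sp: "sigma_pow a (sigma_pow b x) = sigma_pow (a + b) x"
  by (simp add: sp w_add fun_eq_iff mult.assoc)

lemma w_int: "(m * of_int r) \<in> \<int> \<Longrightarrow> w r m = 1"
proof -
  assume "(m * of_int r) \<in> \<int>"
  then obtain z where z: "m * of_int r = of_int z" by (auto elim: Ints_cases)
  have "real_of_rat m * of_int r = of_int z"
    using arg_cong[OF z, of real_of_rat] by (simp add: of_rat_mult)
  then have "- 2 * pi * real_of_rat m * of_int r = 2 * pi * of_int (- z)" by (simp add: algebra_simps)
  then have "cis (- 2 * pi * real_of_rat m * of_int r) = cis (2 * pi * of_int (- z))" by (simp only:)
  also have "\<dots> = 1" by (rule cis_multiple_2pi) simp
  finally show ?thesis unfolding w_def .
qed



lemma expos_iff: "k \<in> expos q \<longleftrightarrow> q k \<noteq> 0" by (simp add: expos_def)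

lemma slope_ge: "finite (expos d) \<Longrightarrow> d m \<noteq> 0 \<Longrightarrow> m \<le> slope d"
  unfolding slope_def by (auto simp: expos_iff)

lemma slope_above: "finite (expos d) \<Longrightarrow> slope d < m \<Longrightarrow> d m = 0"
  using slope_ge by fastforce

lemma slope_in: "finite (expos d) \<Longrightarrow> d \<noteq> (\<lambda>_. 0) \<Longrightarrow> d (slope d) \<noteq> 0"
proof -
  assume f: "finite (expos d)" and "d \<noteq> (\<lambda>_. 0)"
  then have ne: "expos d \<noteq> {}" by (auto simp: expos_iff fun_eq_iff)
  then have "slope d = Max (expos d)" by (simp add: slope_def)
  also have "\<dots> \<in> expos d" using f ne by simp
  finally show ?thesis by (simp add: expos_iff)
qed

lemma slope_char: "finite (expos d) \<Longrightarrow> d s \<noteq> 0 \<Longrightarrow> (\<And>m. s < m \<Longrightarrow> d m = 0) \<Longrightarrow> slope d = s"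
proof -
  assume f: "finite (expos d)" and ds: "d s \<noteq> 0" and a: "\<And>m. s < m \<Longrightarrow> d m = 0"
  have "d \<noteq> (\<lambda>_. 0)" using ds by auto
  then have "d (slope d) \<noteq> 0" using slope_in f by blast
  then have "\<not> s < slope d" using a by blast
  moreover have "s \<le> slope d" using slope_ge f ds by blast
  ultimately show ?thesis by simp
qed

lemma slope_zero_fun[simp]: "slope (\<lambda>_. 0) = 0" by (simp add: slope_def expos_def)

lemma slope_nonneg: "is_efac d \<Longrightarrow> 0 \<le> slope d"
  unfolding is_efac_def slope_def
  by (auto intro: order.strict_implies_order[THEN order.trans] Max_ge)

lemma slope_eq0: "is_efac d \<Longrightarrow> slope d = 0 \<Longrightarrow> d = (\<lambda>_. 0)"
proof (rule ccontr)
  assume e: "is_efac d" and s: "slope d = 0" and n: "d \<noteq> (\<lambda>_. 0)"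
  have f: "finite (expos d)" using e by (simp add: is_efac_def)
  have "d (slope d) \<noteq> 0" using slope_in[OF f n] .
  then have "slope d \<in> expos d" using expos_iff by blast
  then have "slope d > 0" using e unfolding is_efac_def by blast
  with s show False by simp
qed

lemma slope_cong: "expos a = expos b \<Longrightarrow> slope a = slope b" by (simp add: slope_def)

lemma slope_mono: "is_efac b \<Longrightarrow> expos a \<subseteq> expos b \<Longrightarrow> slope a \<le> slope b"
proof -
  assume e: "is_efac b" and sub: "expos a \<subseteq> expos b"
  then have f: "finite (expos a)" by (auto simp: is_efac_def intro: finite_subset)
  show ?thesis
  proof (cases "a = (\<lambda>_. 0)")
    case True then show ?thesis using slope_nonneg[OF e] by simp
  next
    case False
    then have "a (slope a) \<noteq> 0" using slope_in f by blast
    then have "b (slope a) \<noteq> 0" using sub by (auto simp: expos_iff)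
    then show ?thesis using slope_ge e by (auto simp: is_efac_def)
  qed
qed

lemma slope_scale: "(\<And>m. c m \<noteq> 0) \<Longrightarrow> slope (\<lambda>m. c m * d m) = slope d"
  by (rule slope_cong) (auto simp: expos_iff)

lemma slope_swap: "slope (x - y) = slope (y - x)"
  by (rule slope_cong) (auto simp: expos_iff)

lemma efac_diff: "is_efac x \<Longrightarrow> is_efac y \<Longrightarrow> is_efac (x - y)"
proof -
  assume a: "is_efac x" "is_efac y"
  have "expos (x - y) \<subseteq> expos x \<union> expos y" by (auto simp: expos_iff)
  then show ?thesis using a unfolding is_efac_def by (auto intro: finite_subset)
qed

lemma efac_scale: "is_efac x \<Longrightarrow> is_efac (\<lambda>m. c m * x m)"
proof -
  assume a: "is_efac x"
  have "expos (\<lambda>m. c m * x m) \<subseteq> expos x" by (auto simp: expos_iff)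
  then show ?thesis using a unfolding is_efac_def by (auto intro: finite_subset)
qed

lemma efac_sp: "is_efac x \<Longrightarrow> is_efac (sigma_pow j x)"
  by (simp add: sp efac_scale)

lemma efac_sub: "is_efac x \<Longrightarrow> (\<And>m. y m \<noteq> 0 \<Longrightarrow> x m \<noteq> 0) \<Longrightarrow> is_efac y"
proof -
  assume a: "is_efac x" and h: "\<And>m. y m \<noteq> 0 \<Longrightarrow> x m \<noteq> 0"
  have "expos y \<subseteq> expos x" using h by (auto simp: expos_iff)
  then show ?thesis using a unfolding is_efac_def by (auto intro: finite_subset)
qed

lemma efac_trunc: "is_efac x \<Longrightarrow> is_efac (trunc k x)"
  by (erule efac_sub) (simp add: trunc_def split: if_splits)

lemma efac_fin: "is_efac x \<Longrightarrow> finite (expos x)" by (simp add: is_efac_def)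
lemma efac_pos: "is_efac x \<Longrightarrow> x m \<noteq> 0 \<Longrightarrow> 0 < m" by (auto simp: is_efac_def expos_iff)

definition gg :: "efac \<Rightarrow> efac \<Rightarrow> int \<Rightarrow> rat" where
  "gg x y d = slope (sigma_pow d x - y)"

lemma slope_sp2: "slope (sigma_pow a x - sigma_pow b y) = gg x y (a - b)"
proof -
  have "sigma_pow a x - sigma_pow b y = (\<lambda>m. w b m * (sigma_pow (a - b) x - y) m)"
  proof (rule ext)
    fix m
    have "w a m = w b m * w (a - b) m" using w_add[of b "a - b" m] by simp
    then show "(sigma_pow a x - sigma_pow b y) m = w b m * (sigma_pow (a - b) x - y) m"
      by (simp add: sp algebra_simps)
  qed
  moreover have "slope (\<lambda>m. w b m * (sigma_pow (a - b) x - y) m) = slope (sigma_pow (a - b) x - y)"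
    by (rule slope_scale) simp
  ultimately show ?thesis unfolding gg_def by simp
qed

lemma gg_sym: "gg y x d = gg x y (- d)"
proof -
  have "gg y x d = slope (x - sigma_pow d y)" unfolding gg_def by (rule slope_swap)
  also have "\<dots> = slope (sigma_pow 0 x - sigma_pow d y)" by simp
  also have "\<dots> = gg x y (- d)" using slope_sp2[of 0 x d y] by simp
  finally show ?thesis .
qed

lemma stokes_sp: "stokes (sigma_pow j x) = stokes x"
  unfolding stokes_def sp_sp
  by (auto, metis add.commute diff_add_cancel)

lemma stokes_eq: "stokes x = stokes y \<Longrightarrow> \<exists>j. y = sigma_pow j x"
proof -
  assume "stokes x = stokes y"
  moreover have "y \<in> stokes y" unfolding stokes_def by (auto intro: exI[of _ 0])
  ultimately show ?thesis unfolding stokes_def by auto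
qed

lemma sp_period: "sigma_pow r x = x \<Longrightarrow> sigma_pow (a + r * t) x = sigma_pow a x"
proof (induction t arbitrary: a rule: int_induct[where k = 0])
  case base then show ?case by simp
next
  case (step1 i)
  have "sigma_pow (a + r * (i + 1)) x = sigma_pow (a + r * i) (sigma_pow r x)"
    by (simp add: sp_sp algebra_simps)
  then show ?case using step1 by simp
next
  case (step2 i)
  have "sigma_pow (a + r * i) x = sigma_pow (a + r * (i - 1)) (sigma_pow r x)"
    by (simp add: sp_sp algebra_simps)
  then show ?case using step2 by simp
qed

lemma sp_mod: "sigma_pow r x = x \<Longrightarrow> sigma_pow d x = sigma_pow (d mod r) x"
  using sp_period[of r x "d mod r" "d div r"] by (simp add: mod_mult_div_eq)

lemma ram_prop: "is_efac x \<Longrightarrow> 1 \<le> ram x \<and> sigma_pow (int (ram x)) x = x"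
proof -
  assume e: "is_efac x"
  define R where "R = (\<Prod>k\<in>expos x. nat (snd (quotient_of k)))"
  have R1: "1 \<le> R" unfolding R_def
  proof (rule prod_ge_1)
    fix k show "1 \<le> nat (snd (quotient_of k))" using quotient_of_denom_pos'[of k] by simp
  qed
  have RI: "\<forall>k\<in>expos x. \<exists>m::int. k * of_nat R = of_int m"
  proof
    fix k assume k: "k \<in> expos x"
    obtain a b where ab: "quotient_of k = (a, b)" by fastforce
    have b: "b > 0" using quotient_of_denom_pos[OF ab] .
    have "R = nat b * (\<Prod>k\<in>expos x - {k}. nat (snd (quotient_of k)))"
      unfolding R_def using k efac_fin[OF e] by (simp add: prod.remove ab)
    then have "k * of_nat R = of_int a * of_nat (\<Prod>k\<in>expos x - {k}. nat (snd (quotient_of k)))"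
      using quotient_of_div[OF ab] b by (simp add: of_nat_mult)
    then show "\<exists>m::int. k * of_nat R = of_int m" by (metis of_int_mult of_int_of_nat_eq)
  qed
  have ex: "\<exists>r::nat. r \<ge> 1 \<and> (\<forall>k\<in>expos x. \<exists>m::int. k * of_nat r = of_int m)"
    using R1 RI by blast
  have P: "ram x \<ge> 1 \<and> (\<forall>k\<in>expos x. \<exists>m::int. k * of_nat (ram x) = of_int m)"
    unfolding ram_def using LeastI_ex[OF ex] .
  have "sigma_pow (int (ram x)) x = x"
  proof (rule ext)
    fix m show "sigma_pow (int (ram x)) x m = x m"
    proof (cases "x m = 0")
      case True then show ?thesis by (simp add: sp)
    next
      case False
      then obtain z::int where "m * of_nat (ram x) = of_int z" using P False unfolding expos_def by blast
      then have "w (int (ram x)) m = 1" by (intro w_int) simp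
      then show ?thesis by (simp add: sp)
    qed
  qed
  then show ?thesis using P by simp
qed



definition lw :: "rat \<Rightarrow> efac \<Rightarrow> efac" where
  "lw k x = (\<lambda>m. if k \<le> m then 0 else x m)"

lemma efac_lw: "is_efac x \<Longrightarrow> is_efac (lw k x)"
  by (erule efac_sub) (simp add: lw_def split: if_splits)

lemma minus_trunc: "x - trunc k x = lw k x"
  by (simp add: fun_eq_iff trunc_def lw_def)

lemma slope_lw: "is_efac x \<Longrightarrow> 0 < k \<Longrightarrow> slope (lw k x) < k"
proof -
  assume e: "is_efac x" and k: "0 < k"
  show ?thesis
  proof (cases "lw k x = (\<lambda>_. 0)")
    case True then show ?thesis using k by simp
  next
    case False
    then have "lw k x (slope (lw k x)) \<noteq> 0" using slope_in efac_fin efac_lw e by blast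
    then show ?thesis by (auto simp: lw_def split: if_splits)
  qed
qed

lemma common_facts:
  assumes e: "is_efac p" and ce: "common_exists p ph"
  shows "common_exp p ph \<in> expos p \<and> stokes (trunc (common_exp p ph) p) = stokes (trunc (common_exp p ph) ph)
    \<and> (\<forall>e\<in>expos p. e < common_exp p ph \<longrightarrow> stokes (trunc e p) \<noteq> stokes (trunc e ph))"
proof -
  define S where "S = {k \<in> expos p. stokes (trunc k p) = stokes (trunc k ph)}"
  have fS: "finite S" unfolding S_def using efac_fin[OF e] by simp
  have nS: "S \<noteq> {}" using ce unfolding S_def common_exists_def by blast
  have MS: "Min S \<in> S" using fS nS by simp
  have "common_exp p ph = Min S" unfolding common_exp_def
  proof (rule Least_equality)
    show "Min S \<in> expos p \<and> stokes (trunc (Min S) p) = stokes (trunc (Min S) ph)" using MS S_def by blast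
  next
    fix y assume "y \<in> expos p \<and> stokes (trunc y p) = stokes (trunc y ph)"
    then have "y \<in> S" unfolding S_def by blast
    then show "Min S \<le> y" using fS by simp
  qed
  moreover have "\<forall>e\<in>expos p. e < Min S \<longrightarrow> stokes (trunc e p) \<noteq> stokes (trunc e ph)"
  proof (intro ballI impI notI)
    fix e assume "e \<in> expos p" "e < Min S" "stokes (trunc e p) = stokes (trunc e ph)"
    then have "e \<in> S" "e < Min S" unfolding S_def by auto
    then show False using fS by (meson Min_le not_le)
  qed
  ultimately show ?thesis using MS unfolding S_def by auto
qed

lemma decomp:
  assumes e: "is_efac p" "is_efac ph" and ce: "common_exists p ph"
  defines "k \<equiv> common_exp p ph"
  shows "fst (common_part p ph) = trunc k p" "snd (common_part p ph) = trunc k ph"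
    "0 < k" "fission p ph = max (slope (lw k p)) (slope (lw k ph))" "fission p ph < k"
    "k \<in> expos p" "\<And>e. e \<in> expos p \<Longrightarrow> e < k \<Longrightarrow> stokes (trunc e p) \<noteq> stokes (trunc e ph)"
proof -
  note cf = common_facts[OF e(1) ce, folded k_def]
  show 1: "fst (common_part p ph) = trunc k p" "snd (common_part p ph) = trunc k ph"
    using ce unfolding common_part_def k_def by simp_all
  show k: "0 < k" using cf e(1) by (auto simp: is_efac_def)
  show f: "fission p ph = max (slope (lw k p)) (slope (lw k ph))"
    unfolding fission_def 1 minus_trunc ..
  show "fission p ph < k" unfolding f using slope_lw[OF e(1) k] slope_lw[OF e(2) k] by simp
  show "k \<in> expos p" using cf by blast
  show "\<And>e. e \<in> expos p \<Longrightarrow> e < k \<Longrightarrow> stokes (trunc e p) \<noteq> stokes (trunc e ph)" using cf by blast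
qed

lemma nodecomp:
  assumes ce: "\<not> common_exists p ph"
  shows "fst (common_part p ph) = (\<lambda>_. 0)" "snd (common_part p ph) = (\<lambda>_. 0)"
    "fission p ph = max (slope p) (slope ph)"
proof -
  show 1: "fst (common_part p ph) = (\<lambda>_. 0)" "snd (common_part p ph) = (\<lambda>_. 0)"
    using ce unfolding common_part_def by simp_all
  have a: "p - (\<lambda>_. 0) = p" "ph - (\<lambda>_. 0) = ph" by (simp_all add: fun_eq_iff)
  show "fission p ph = max (slope p) (slope ph)" unfolding fission_def 1 a ..
qed

lemma M:
  assumes e: "is_efac L" "is_efac Lh"
    and h: "slope L = slope Lh \<Longrightarrow> 0 < slope L \<Longrightarrow> w j (slope L) * L (slope L) \<noteq> Lh (slope L)"
  shows "slope (sigma_pow j L - Lh) = max (slope L) (slope Lh)"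
proof -
  define D where "D = sigma_pow j L - Lh"
  have D: "\<And>m. D m = w j m * L m - Lh m" by (simp add: D_def sp)
  have fD: "finite (expos D)" unfolding D_def using efac_fin efac_diff efac_sp e by blast
  have fL: "finite (expos L)" "finite (expos Lh)" using e efac_fin by auto
  have n: "0 \<le> slope L" "0 \<le> slope Lh" using e slope_nonneg by auto
  consider "slope Lh < slope L" | "slope L < slope Lh" | "slope L = slope Lh" by linarith
  then show ?thesis
  proof cases
    case 1
    then have "L \<noteq> (\<lambda>_. 0)" using n by auto
    then have "L (slope L) \<noteq> 0" using slope_in fL by blast
    moreover have "Lh (slope L) = 0" using slope_above fL 1 by blast
    ultimately have "D (slope L) \<noteq> 0" by (simp add: D)
    moreover have "\<And>m. slope L < m \<Longrightarrow> D m = 0"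
    proof -
      fix m assume a: "slope L < m"
      have "L m = 0" using slope_above[OF fL(1)] a 1 by simp
      moreover have "Lh m = 0" using slope_above[OF fL(2)] a 1 by simp
      ultimately show "D m = 0" by (simp add: D)
    qed
    ultimately have "slope D = slope L" using slope_char fD by blast
    then show ?thesis using 1 D_def by simp
  next
    case 2
    then have "Lh \<noteq> (\<lambda>_. 0)" using n by auto
    then have "Lh (slope Lh) \<noteq> 0" using slope_in fL by blast
    moreover have "L (slope Lh) = 0" using slope_above fL 2 by blast
    ultimately have "D (slope Lh) \<noteq> 0" by (simp add: D)
    moreover have "\<And>m. slope Lh < m \<Longrightarrow> D m = 0"
    proof -
      fix m assume a: "slope Lh < m"
      have "L m = 0" using slope_above[OF fL(1)] a 2 by simp
      moreover have "Lh m = 0" using slope_above[OF fL(2)] a 2 by simp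
      ultimately show "D m = 0" by (simp add: D)
    qed
    ultimately have "slope D = slope Lh" using slope_char fD by blast
    then show ?thesis using 2 D_def by simp
  next
    case 3
    show ?thesis
    proof (cases "slope L = 0")
      case True
      then have "L = (\<lambda>_. 0)" "Lh = (\<lambda>_. 0)" using slope_eq0 e 3 by auto
      then have "D = (\<lambda>_. 0)" by (simp add: fun_eq_iff D)
      then show ?thesis using True 3 D_def by simp
    next
      case False
      then have "D (slope L) \<noteq> 0" using h 3 n by (simp add: D)
      moreover have "\<And>m. slope L < m \<Longrightarrow> D m = 0"
      proof -
      fix m assume a: "slope L < m"
      have "L m = 0" using slope_above[OF fL(1)] a 3 by simp
      moreover have "Lh m = 0" using slope_above[OF fL(2)] a 3 by simp
      ultimately show "D m = 0" by (simp add: D)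
    qed
      ultimately have "slope D = slope L" using slope_char fD by blast
      then show ?thesis using 3 D_def by simp
    qed
  qed
qed



lemma Ga:
  assumes e: "is_efac p" "is_efac ph"
    and h: "sigma_pow j (fst (common_part p ph)) = snd (common_part p ph)"
  shows "gg p ph j = fission p ph"
proof (cases "common_exists p ph")
  case True
  note dc = decomp[OF e True]
  define k where "k = common_exp p ph"
  note dc = dc[folded k_def]
  have hk: "\<And>m. k \<le> m \<Longrightarrow> w j m * p m = ph m"
  proof -
    fix m assume "k \<le> m"
    have "sigma_pow j (trunc k p) m = trunc k ph m" using h dc(1,2) by simp
    then show "w j m * p m = ph m" using \<open>k \<le> m\<close> by (simp add: sp trunc_def)
  qed
  define L where "L = lw k p"
  define Lh where "Lh = lw k ph"
  have eL: "is_efac L" "is_efac Lh" unfolding L_def Lh_def using e efac_lw by auto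
  have fL: "finite (expos L)" "finite (expos Lh)" using eL efac_fin by auto
  have eq: "sigma_pow j p - ph = sigma_pow j L - Lh"
    by (rule ext) (simp add: sp L_def Lh_def lw_def hk)
  have "slope (sigma_pow j L - Lh) = max (slope L) (slope Lh)"
  proof (rule M[OF eL], rule notI)
    assume s: "slope L = slope Lh" "0 < slope L" and c: "w j (slope L) * L (slope L) = Lh (slope L)"
    define t where "t = slope L"
    have "L \<noteq> (\<lambda>_. 0)" using s by auto
    then have Lt: "L t \<noteq> 0" using slope_in fL t_def by blast
    then have tk: "t < k" by (auto simp: L_def lw_def split: if_splits)
    then have pt: "p t \<noteq> 0" using Lt by (simp add: L_def lw_def)
    have "sigma_pow j (trunc t p) = trunc t ph"
    proof (rule ext)
      fix m
      consider "m < t" | "m = t" | "t < m \<and> m < k" | "k \<le> m" by linarith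
      then show "sigma_pow j (trunc t p) m = trunc t ph m"
      proof cases
        case 1 then show ?thesis by (simp add: sp trunc_def)
      next
        case 2 then show ?thesis using c tk by (simp add: sp trunc_def L_def Lh_def lw_def t_def)
      next
        case 3
        have "L m = 0" using slope_above[OF fL(1)] 3 t_def by simp
        moreover have "Lh m = 0" using slope_above[OF fL(2)] 3 t_def s by simp
        ultimately show ?thesis using 3 by (simp add: sp trunc_def L_def Lh_def lw_def)
      next
        case 4 then show ?thesis using hk tk by (simp add: sp trunc_def)
      qed
    qed
    then have "stokes (trunc t p) = stokes (trunc t ph)" using stokes_sp by metis
    then show False using dc(7)[of t] pt tk by (simp add: expos_iff)
  qed
  then show ?thesis unfolding gg_def eq dc(4) L_def Lh_def .
next
  case False
  note dc = nodecomp[OF False]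
  have "slope (sigma_pow j p - ph) = max (slope p) (slope ph)"
  proof (rule M[OF e], rule notI)
    assume s: "slope p = slope ph" "0 < slope p" and c: "w j (slope p) * p (slope p) = ph (slope p)"
    define t where "t = slope p"
    have fL: "finite (expos p)" "finite (expos ph)" using e efac_fin by auto
    have "p \<noteq> (\<lambda>_. 0)" using s by auto
    then have pt: "p t \<noteq> 0" using slope_in fL t_def by blast
    have "sigma_pow j (trunc t p) = trunc t ph"
    proof (rule ext)
      fix m
      consider "m < t" | "m = t" | "t < m" by linarith
      then show "sigma_pow j (trunc t p) m = trunc t ph m"
      proof cases
        case 1 then show ?thesis by (simp add: sp trunc_def)
      next
        case 2 then show ?thesis using c by (simp add: sp trunc_def t_def)
      next
        case 3
        have "p m = 0" using slope_above[OF fL(1)] 3 t_def by simp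
        moreover have "ph m = 0" using slope_above[OF fL(2)] 3 t_def s by simp
        ultimately show ?thesis using 3 by (simp add: sp trunc_def)
      qed
    qed
    then have "stokes (trunc t p) = stokes (trunc t ph)" using stokes_sp by metis
    then have "common_exists p ph" unfolding common_exists_def using pt by (auto simp: expos_iff)
    then show False using False by simp
  qed
  then show ?thesis unfolding gg_def dc(3) .
qed

lemma Gb:
  assumes e: "is_efac p" "is_efac ph"
    and h: "sigma_pow j (fst (common_part p ph)) \<noteq> snd (common_part p ph)"
  shows "fission p ph < gg p ph j"
proof (cases "common_exists p ph")
  case True
  note dc = decomp[OF e True]
  define k where "k = common_exp p ph"
  note dc = dc[folded k_def]
  obtain m0 where m0: "sigma_pow j (trunc k p) m0 \<noteq> trunc k ph m0" using h dc(1,2) by auto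
  then have km: "k \<le> m0" by (auto simp: sp trunc_def split: if_splits)
  have "(sigma_pow j p - ph) m0 \<noteq> 0" using m0 km by (simp add: sp trunc_def)
  then have "m0 \<le> gg p ph j" unfolding gg_def
    using slope_ge efac_fin efac_diff efac_sp e by blast
  then show ?thesis using dc(5) km by simp
next
  case False
  then show ?thesis using h nodecomp[OF False] by (simp add: sp)
qed



lemma S1:
  assumes fA: "finite (expos A)" and fB: "finite (expos B)" and nA: "A \<noteq> (\<lambda>_. 0)"
    and hA: "\<And>m. A m \<noteq> 0 \<Longrightarrow> k \<le> m" and hB: "\<And>m. B m \<noteq> 0 \<Longrightarrow> m < k"
  shows "slope (\<lambda>m. A m + B m) = slope A"
proof (rule slope_char)
  have "expos (\<lambda>m. A m + B m) \<subseteq> expos A \<union> expos B" by (auto simp: expos_iff)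
  then show "finite (expos (\<lambda>m. A m + B m))" using fA fB by (auto intro: finite_subset)
  have As: "A (slope A) \<noteq> 0" using slope_in fA nA by blast
  then have "k \<le> slope A" using hA by blast
  then have "B (slope A) = 0" using hB by force
  then show "A (slope A) + B (slope A) \<noteq> 0" using As by simp
  fix m assume m: "slope A < m"
  then have "A m = 0" using slope_above fA by blast
  moreover have "B m = 0" using hB m \<open>k \<le> slope A\<close> by force
  ultimately show "A m + B m = 0" by simp
qed

lemma Lx1:
  assumes e: "is_efac x" "is_efac y"
    and h: "sigma_pow i (fst (common_part x y)) = fst (common_part x y)"
  shows "gg x x i \<le> fission x y"
proof (cases "common_exists x y")
  case True
  note dc = decomp[OF e True]
  define k where "k = common_exp x y"
  note dc = dc[folded k_def]
  have hk: "\<And>m. k \<le> m \<Longrightarrow> w i m * x m = x m"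
  proof -
    fix m assume "k \<le> m"
    have "sigma_pow i (trunc k x) m = trunc k x m" using h dc(1) by simp
    then show "w i m * x m = x m" using \<open>k \<le> m\<close> by (simp add: sp trunc_def)
  qed
  define L where "L = lw k x"
  have eL: "is_efac L" unfolding L_def using e efac_lw by auto
  have eq: "sigma_pow i x - x = sigma_pow i L - L"
    by (rule ext) (simp add: sp L_def lw_def hk)
  have "expos (sigma_pow i L - L) \<subseteq> expos L" by (auto simp: expos_iff sp)
  then have "slope (sigma_pow i L - L) \<le> slope L" using slope_mono[OF eL] by blast
  then show ?thesis unfolding gg_def eq dc(4) L_def by simp
next
  case False
  have "expos (sigma_pow i x - x) \<subseteq> expos x" by (auto simp: expos_iff sp)
  then have "slope (sigma_pow i x - x) \<le> slope x" using slope_mono[OF e(1)] by blast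
  then show ?thesis unfolding gg_def nodecomp(3)[OF False] by simp
qed

lemma Lx2:
  assumes e: "is_efac x" "is_efac y"
    and h: "sigma_pow i (fst (common_part x y)) \<noteq> fst (common_part x y)"
  shows "common_exists x y" "gg x x i = slope (sigma_pow i (fst (common_part x y)) - fst (common_part x y))"
    "fission x y < gg x x i"
proof -
  show ce: "common_exists x y"
  proof (rule ccontr)
    assume "\<not> common_exists x y"
    then show False using h nodecomp by (simp add: sp)
  qed
  note dc = decomp[OF e ce]
  define k where "k = common_exp x y"
  note dc = dc[folded k_def]
  define c where "c = trunc k x"
  define A where "A = sigma_pow i c - c"
  define B where "B = sigma_pow i (lw k x) - lw k x"
  have eq: "sigma_pow i x - x = (\<lambda>m. A m + B m)"
    by (rule ext) (simp add: A_def B_def c_def sp lw_def trunc_def)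
  have nA: "A \<noteq> (\<lambda>_. 0)" using h dc(1) unfolding A_def c_def by (auto simp: fun_eq_iff)
  have "slope (\<lambda>m. A m + B m) = slope A"
  proof (rule S1[OF _ _ nA])
    show "finite (expos A)" unfolding A_def c_def by (intro efac_fin efac_diff efac_sp efac_trunc e)
    show "finite (expos B)" unfolding B_def by (intro efac_fin efac_diff efac_sp efac_lw e)
    show "\<And>m. A m \<noteq> 0 \<Longrightarrow> k \<le> m" unfolding A_def c_def by (auto simp: sp trunc_def split: if_splits)
    show "\<And>m. B m \<noteq> 0 \<Longrightarrow> m < k" unfolding B_def by (auto simp: sp lw_def split: if_splits)
  qed
  then show g: "gg x x i = slope (sigma_pow i (fst (common_part x y)) - fst (common_part x y))"
    unfolding gg_def eq dc(1) A_def c_def .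
  obtain m0 where m0: "A m0 \<noteq> 0" using nA by auto
  then have km: "k \<le> m0" unfolding A_def c_def by (auto simp: sp trunc_def split: if_splits)
  have "(sigma_pow i x - x) m0 \<noteq> 0" using m0 km unfolding A_def c_def by (simp add: sp trunc_def)
  then have "m0 \<le> gg x x i" unfolding gg_def
    by (intro slope_ge efac_fin efac_diff efac_sp e)
  then show "fission x y < gg x x i" using dc(5) km by simp
qed

lemma cross:
  assumes e: "is_efac x" "is_efac y" and comp: "compatible x y"
  shows "gg x y d = max (gg x x d) (fission x y)"
proof (cases "sigma_pow d (fst (common_part x y)) = fst (common_part x y)")
  case True
  have "gg x y d = fission x y" using Ga[OF e] True comp unfolding compatible_def by simp
  moreover have "gg x x d \<le> fission x y" using Lx1[OF e True] .
  ultimately show ?thesis by simp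
next
  case False
  note l2 = Lx2[OF e False]
  note dc = decomp[OF e l2(1)]
  define k where "k = common_exp x y"
  note dc = dc[folded k_def]
  have tt: "trunc k y = trunc k x" using comp dc(1,2) unfolding compatible_def by simp
  define c where "c = trunc k x"
  define A where "A = sigma_pow d c - c"
  define B where "B = sigma_pow d (lw k x) - lw k y"
  have yk: "\<And>m. k \<le> m \<Longrightarrow> y m = x m"
  proof -
    fix m assume "k \<le> m" then show "y m = x m" using fun_cong[OF tt, of m] by (simp add: trunc_def)
  qed
  have eq: "sigma_pow d x - y = (\<lambda>m. A m + B m)"
    by (rule ext) (simp add: A_def B_def c_def sp lw_def trunc_def yk)
  have nA: "A \<noteq> (\<lambda>_. 0)" using False dc(1) unfolding A_def c_def by (auto simp: fun_eq_iff)
  have "slope (\<lambda>m. A m + B m) = slope A"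
  proof (rule S1[OF _ _ nA])
    show "finite (expos A)" unfolding A_def c_def by (intro efac_fin efac_diff efac_sp efac_trunc e)
    show "finite (expos B)" unfolding B_def by (intro efac_fin efac_diff efac_sp efac_lw e)
    show "\<And>m. A m \<noteq> 0 \<Longrightarrow> k \<le> m" unfolding A_def c_def by (auto simp: sp trunc_def split: if_splits)
    show "\<And>m. B m \<noteq> 0 \<Longrightarrow> m < k" unfolding B_def by (auto simp: sp lw_def split: if_splits)
  qed
  then have "gg x y d = slope A" unfolding gg_def eq .
  then have "gg x y d = gg x x d" using l2(2) dc(1) unfolding A_def c_def by simp
  then show ?thesis using l2(3) by simp
qed

lemma levels_gg: "levels z = {gg z z i | i. True} - {0}"
  unfolding levels_def gg_def by (simp add: slope_swap)

lemma levels_common: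
  assumes e: "is_efac x" "is_efac y"
  shows "levels (fst (common_part x y)) = {v \<in> levels x. fission x y < v}"
proof -
  define c where "c = fst (common_part x y)"
  have gc: "gg c c i = slope (sigma_pow i c - c)" for i unfolding gg_def ..
  show ?thesis unfolding c_def[symmetric]
  proof (intro set_eqI iffI)
    fix v assume "v \<in> levels c"
    then obtain i where v: "v = gg c c i" "v \<noteq> 0" unfolding levels_gg by auto
    have ne: "sigma_pow i c \<noteq> c"
    proof
      assume "sigma_pow i c = c"
      then have "sigma_pow i c - c = (\<lambda>_. 0)" by (simp add: fun_eq_iff)
      then show False using v gc by simp
    qed
    note l2 = Lx2[OF e ne[unfolded c_def]]
    have "v = gg x x i" using l2(2) v gc c_def by simp
    then show "v \<in> {v \<in> levels x. fission x y < v}" using l2(3) v(2) unfolding levels_gg by auto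
  next
    fix v assume "v \<in> {v \<in> levels x. fission x y < v}"
    then obtain i where v: "v = gg x x i" "v \<noteq> 0" "fission x y < v" unfolding levels_gg by auto
    have ne: "sigma_pow i c \<noteq> c"
    proof
      assume "sigma_pow i c = c"
      then show False using Lx1[OF e] v c_def by fastforce
    qed
    note l2 = Lx2[OF e ne[unfolded c_def]]
    have "v = gg c c i" using l2(2) v gc c_def by simp
    then show "v \<in> levels c" using v(2) unfolding levels_gg by auto
  qed
qed

definition Hf :: "rat set \<Rightarrow> int \<Rightarrow> rat" where
  "Hf L d = (if {l \<in> L. w d l \<noteq> 1} = {} then 0 else Max {l \<in> L. w d l \<noteq> 1})"

lemma levels_sub: "is_efac x \<Longrightarrow> levels x \<subseteq> expos x"
proof
  fix v assume e: "is_efac x" and "v \<in> levels x"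
  then obtain i where v: "v = gg x x i" "v \<noteq> 0" unfolding levels_gg by auto
  define D where "D = sigma_pow i x - x"
  have eD: "is_efac D" unfolding D_def by (intro efac_diff efac_sp e)
  have "D \<noteq> (\<lambda>_. 0)" using v unfolding gg_def D_def[symmetric] by auto
  then have "D v \<noteq> 0" using slope_in[OF efac_fin[OF eD]] v unfolding gg_def D_def[symmetric] by blast
  then show "v \<in> expos x" unfolding D_def by (auto simp: sp expos_iff)
qed

lemma gg_Hf:
  assumes e: "is_efac x"
  shows "gg x x d = Hf (levels x) d"
proof -
  define D where "D = sigma_pow d x - x"
  have Dm: "\<And>m. D m = (w d m - 1) * x m" by (simp add: D_def sp algebra_simps)
  have eD: "is_efac D" unfolding D_def by (intro efac_diff efac_sp e)
  define S where "S = {l \<in> levels x. w d l \<noteq> 1}"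
  have fS: "finite S" unfolding S_def using levels_sub[OF e] efac_fin[OF e]
    by (auto intro: finite_subset)
  show ?thesis
  proof (cases "D = (\<lambda>_. 0)")
    case True
    have "S = {}"
    proof (rule ccontr)
      assume "S \<noteq> {}"
      then obtain l where l: "l \<in> levels x" "w d l \<noteq> 1" unfolding S_def by auto
      then have "x l \<noteq> 0" using levels_sub[OF e] by (auto simp: expos_iff)
      then have "D l \<noteq> 0" using l by (simp add: Dm)
      then show False using True by simp
    qed
    then show ?thesis unfolding Hf_def S_def[symmetric] gg_def D_def[symmetric] using True by simp
  next
    case False
    define v where "v = slope D"
    have Dv: "D v \<noteq> 0" using slope_in[OF efac_fin[OF eD]] False v_def by blast
    then have xv: "x v \<noteq> 0" "w d v \<noteq> 1" by (auto simp: Dm)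
    have "v > 0" using efac_pos[OF eD Dv] .
    moreover have "v = gg x x d" by (simp add: gg_def D_def v_def)
    ultimately have "v \<in> levels x" unfolding levels_gg by auto
    then have vS: "v \<in> S" using xv S_def by simp
    have "Max S = v"
    proof (rule Max_eqI[OF fS _ vS])
      fix l assume "l \<in> S"
      then have "x l \<noteq> 0" "w d l \<noteq> 1" using levels_sub[OF e] unfolding S_def by (auto simp: expos_iff)
      then have "D l \<noteq> 0" by (simp add: Dm)
      then show "l \<le> v" unfolding v_def using slope_ge[OF efac_fin[OF eD]] by blast
    qed
    then show ?thesis unfolding Hf_def S_def[symmetric] gg_def D_def[symmetric] using vS v_def by auto
  qed
qed



lemma diff_self_fun: "(x::efac) - x = (\<lambda>_. 0)" by (simp add: fun_eq_iff)

lemma gg_self0[simp]: "gg x x 0 = 0" by (simp add: gg_def diff_self_fun)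

lemma gg_mod:
  assumes "sigma_pow (int r) x = x" "1 \<le> r"
  shows "\<exists>k\<le>r. gg x y d = gg x y (int k)"
proof -
  have "gg x y d = gg x y (d mod int r)" unfolding gg_def using sp_mod[OF assms(1)] by metis
  moreover have "0 \<le> d mod int r" "d mod int r \<le> int r" using assms(2)
    by (simp_all add: order.strict_implies_order)
  ultimately show ?thesis by (intro exI[of _ "nat (d mod int r)"]) simp
qed

lemma gg_ext:
  assumes p1: "sigma_pow (int r) x = x" and p2: "sigma_pow (int r) x' = x'" and r: "1 \<le> r"
    and h: "\<And>k. k \<le> r \<Longrightarrow> gg x' y' (int k) = gg x y (int k)"
  shows "gg x' y' d = gg x y d"
proof -
  have "gg x' y' d = gg x' y' (d mod int r)" "gg x y d = gg x y (d mod int r)"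
    unfolding gg_def using sp_mod[OF p1] sp_mod[OF p2] by metis+
  moreover have "0 \<le> d mod int r" "d mod int r \<le> int r" using r
    by (simp_all add: order.strict_implies_order)
  moreover then have "nat (d mod int r) \<le> r" by linarith
  ultimately show ?thesis using h[of "nat (d mod int r)"] by simp
qed

lemma period_from:
  assumes e: "is_efac x'" and "gg x' x' (int r) = 0"
  shows "sigma_pow (int r) x' = x'"
proof -
  have "sigma_pow (int r) x' - x' = (\<lambda>_. 0)"
    using slope_eq0[OF efac_diff[OF efac_sp[OF e] e]] assms(2) unfolding gg_def by blast
  then show ?thesis by (simp add: fun_eq_iff)
qed

lemma gg_period0: "sigma_pow (int r) x = x \<Longrightarrow> gg x x (int r) = 0"
  by (simp add: gg_def diff_self_fun)



lemma forward:
  assumes e: "is_efac q" "is_efac qh" "is_efac q'" "is_efac qh'"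
    and c: "compatible q qh" "compatible q' qh'"
    and l: "levels q' = levels q" "levels qh' = levels qh" "fission q' qh' = fission q qh"
  shows "irr_equiv [(n, q'), (nh, qh')] [(n, q), (nh, qh)]"
proof -
  have g00: "gg q' q' d = gg q q d" for d by (simp only: gg_Hf[OF e(3)] gg_Hf[OF e(1)] l(1))
  have g11: "gg qh' qh' d = gg qh qh d" for d by (simp only: gg_Hf[OF e(4)] gg_Hf[OF e(2)] l(2))
  have g01: "gg q' qh' d = gg q qh d" for d
    by (simp only: cross[OF e(3,4) c(2)] cross[OF e(1,2) c(1)] g00 l(3))
  have g10: "gg qh' q' d = gg qh q d" for d by (simp only: gg_sym[of qh' q'] gg_sym[of qh q] g01)
  have all: "slope (sigma_pow (int k) (snd ([(n, q'), (nh, qh')]!i)) - sigma_pow (int l) (snd ([(n, q'), (nh, qh')]!j)))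
      = slope (sigma_pow (int k) (snd ([(n, q), (nh, qh)]!i)) - sigma_pow (int l) (snd ([(n, q), (nh, qh)]!j)))"
    if "i < 2" "j < 2" for i j k l
  proof -
    have "i = 0 \<or> i = 1" "j = 0 \<or> j = 1" using that by auto
    then show ?thesis by (elim disjE) (simp_all only: slope_sp2 g00 g11 g01 g10 nth_Cons_0 nth_Cons_Suc One_nat_def snd_conv)
  qed
  have fsts: "fst ([(n, q'), (nh, qh')]!i) = fst ([(n, q), (nh, qh)]!i)" if "i < 2" for i
  proof -
    have "i = 0 \<or> i = 1" using that by auto
    then show ?thesis by (elim disjE) simp_all
  qed
  show ?thesis unfolding irr_equiv_def using all fsts by simp
qed

lemma backward:
  assumes e: "is_efac q" "is_efac qh" "is_efac q'" "is_efac qh'"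
    and dist: "distinct_orbits q qh" and c: "compatible q qh"
    and eqv: "irr_equiv [(n, q'), (nh, qh')] [(n, q), (nh, qh)]"
  shows "distinct_orbits q' qh' \<and> compatible q' qh' \<and>
                 levels q' = levels q \<and> levels qh' = levels qh \<and>
                 levels (fst (common_part q' qh')) = levels (fst (common_part q qh)) \<and>
                 fission q' qh' = fission q qh"
proof -
  have H: "\<forall>i<2. \<forall>j<2. \<forall>k\<le>ram (snd ([(n, q), (nh, qh)]!i)). \<forall>l\<le>ram (snd ([(n, q), (nh, qh)]!j)).
        slope (sigma_pow (int k) (snd ([(n, q'), (nh, qh')]!i)) - sigma_pow (int l) (snd ([(n, q'), (nh, qh')]!j)))
          = slope (sigma_pow (int k) (snd ([(n, q), (nh, qh)]!i)) - sigma_pow (int l) (snd ([(n, q), (nh, qh)]!j)))"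
    using eqv unfolding irr_equiv_def by simp
  define r where "r = ram q"
  define rh where "rh = ram qh"
  have rp: "1 \<le> r" "sigma_pow (int r) q = q" using ram_prop[OF e(1)] r_def by auto
  have rhp: "1 \<le> rh" "sigma_pow (int rh) qh = qh" using ram_prop[OF e(2)] rh_def by auto
  have p00: "gg q' q' (int k) = gg q q (int k)" if "k \<le> r" for k
    using H[rule_format, of 0 0 k 0] that r_def by (simp add: slope_sp2 gg_def)
  have p11: "gg qh' qh' (int k) = gg qh qh (int k)" if "k \<le> rh" for k
    using H[rule_format, of 1 1 k 0] that rh_def by (simp add: slope_sp2 gg_def)
  have p01: "gg q' qh' (int k) = gg q qh (int k)" if "k \<le> r" for k
    using H[rule_format, of 0 1 k 0] that r_def by (simp add: slope_sp2 gg_def)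
  have per1: "sigma_pow (int r) q' = q'"
    using period_from[OF e(3)] p00[of r] gg_period0[OF rp(2)] by simp
  have per2: "sigma_pow (int rh) qh' = qh'"
    using period_from[OF e(4)] p11[of rh] gg_period0[OF rhp(2)] by simp
  have A00: "gg q' q' d = gg q q d" for d using gg_ext[OF rp(2) per1 rp(1) p00] .
  have A11: "gg qh' qh' d = gg qh qh d" for d using gg_ext[OF rhp(2) per2 rhp(1) p11] .
  have A01: "gg q' qh' d = gg q qh d" for d using gg_ext[OF rp(2) per1 rp(1) p01] .
  have L1: "levels q' = levels q" unfolding levels_gg A00 ..
  have L2: "levels qh' = levels qh" unfolding levels_gg A11 ..
  have D: "distinct_orbits q' qh'" unfolding distinct_orbits_def
  proof
    assume "stokes q' = stokes qh'"
    then obtain j where j: "qh' = sigma_pow j q'" using stokes_eq by blast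
    have "gg q qh j = 0" using A01[of j] unfolding j gg_def by (simp add: diff_self_fun)
    then have "sigma_pow j q - qh = (\<lambda>_. 0)"
      using slope_eq0[OF efac_diff[OF efac_sp[OF e(1)] e(2)]] unfolding gg_def by blast
    then have "qh = sigma_pow j q" by (simp add: fun_eq_iff)
    then have "stokes qh = stokes q" using stokes_sp by simp
    then show False using dist unfolding distinct_orbits_def by simp
  qed
  have CR: "gg q' qh' d = max (gg q' q' d) (fission q qh)" for d
    using cross[OF e(1,2) c] A01 A00 by simp
  have f0: "gg q qh 0 = fission q qh" using Ga[OF e(1,2)] c unfolding compatible_def by simp
  have "0 \<le> gg q qh 0" unfolding gg_def by (intro slope_nonneg efac_diff efac_sp e)
  then have fnn: "0 \<le> fission q qh" using f0 by simp
  have g0: "gg q' qh' 0 = fission q qh" using CR[of 0] fnn by simp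
  have C: "compatible q' qh'"
  proof (rule ccontr)
    assume nc: "\<not> compatible q' qh'"
    then have ne: "sigma_pow 0 (fst (common_part q' qh')) \<noteq> snd (common_part q' qh')"
      unfolding compatible_def by simp
    have lt: "fission q' qh' < fission q qh" using Gb[OF e(3,4) ne] g0 by simp
    have ce: "common_exists q' qh'" using nc nodecomp unfolding compatible_def by metis
    note dc = decomp[OF e(3,4) ce]
    define k where "k = common_exp q' qh'"
    note dc = dc[folded k_def]
    have "stokes (trunc k q') = stokes (trunc k qh')" using common_facts[OF e(3) ce] k_def by simp
    then obtain j where "trunc k qh' = sigma_pow j (trunc k q')" using stokes_eq by blast
    then have "sigma_pow j (fst (common_part q' qh')) = snd (common_part q' qh')" using dc(1,2) by simp
    then have "gg q' qh' j = fission q' qh'" using Ga[OF e(3,4)] by blast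
    moreover have "fission q qh \<le> gg q' qh' j" using CR[of j] by simp
    ultimately show False using lt by simp
  qed
  have F: "fission q' qh' = fission q qh"
    using Ga[OF e(3,4)] C g0 unfolding compatible_def by simp
  have LC: "levels (fst (common_part q' qh')) = levels (fst (common_part q qh))"
    unfolding levels_common[OF e(1,2)] levels_common[OF e(3,4)] L1 F ..
  show ?thesis using D C L1 L2 LC F by blast
qed

theorem mainTheorem5:
  fixes n nh :: nat and q qh :: efac
  assumes Q: "pointed_irr_type [(n, q), (nh, qh)]"
    and comp: "compatible q qh"
  shows "(\<forall>Q'. wf_list Q' \<longrightarrow>
            (irr_equiv Q' [(n, q), (nh, qh)] \<longleftrightarrow>
              (\<exists>q' qh'. Q' = [(n, q'), (nh, qh')] \<and> is_efac q' \<and> is_efac qh' \<and>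
                 distinct_orbits q' qh' \<and> compatible q' qh' \<and>
                 levels q' = levels q \<and> levels qh' = levels qh \<and>
                 levels (fst (common_part q' qh')) = levels (fst (common_part q qh)) \<and>
                 fission q' qh' = fission q qh)))
       \<and> (\<forall>q' qh'. is_efac q' \<longrightarrow> is_efac qh' \<longrightarrow> distinct_orbits q' qh' \<longrightarrow> compatible q' qh' \<longrightarrow>
            ((levels q' = levels q \<and> levels qh' = levels qh \<and>
              levels (fst (common_part q' qh')) = levels (fst (common_part q qh)) \<and>
              fission q' qh' = fission q qh)
             \<longleftrightarrow> (levels q' = levels q \<and> levels qh' = levels qh \<and> fission q' qh' = fission q qh)))"
proof -
  have e: "is_efac q" "is_efac qh" using Q unfolding pointed_irr_type_def wf_list_def by auto
  have A: "\<forall>i<length [(n, q), (nh, qh)]. \<forall>j<length [(n, q), (nh, qh)]. i \<noteq> j \<longrightarrow>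
      distinct_orbits (snd ([(n, q), (nh, qh)] ! i)) (snd ([(n, q), (nh, qh)] ! j))"
    using Q unfolding pointed_irr_type_def by (rule conjunct2)
  have "distinct_orbits (snd ([(n, q), (nh, qh)] ! 0)) (snd ([(n, q), (nh, qh)] ! 1))"
    using A[rule_format, of 0 1] by simp
  then have dist: "distinct_orbits q qh" by simp
  have part1: "irr_equiv Q' [(n, q), (nh, qh)] \<longleftrightarrow>
              (\<exists>q' qh'. Q' = [(n, q'), (nh, qh')] \<and> is_efac q' \<and> is_efac qh' \<and>
                 distinct_orbits q' qh' \<and> compatible q' qh' \<and>
                 levels q' = levels q \<and> levels qh' = levels qh \<and>
                 levels (fst (common_part q' qh')) = levels (fst (common_part q qh)) \<and>
                 fission q' qh' = fission q qh)" if wf: "wf_list Q'" for Q'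
  proof
    assume eqv: "irr_equiv Q' [(n, q), (nh, qh)]"
    then have "length Q' = 2" unfolding irr_equiv_def by simp
    then obtain a b where ab: "Q' = [a, b]" by (auto simp: numeral_2_eq_2 length_Suc_conv)
    have F: "\<forall>i<length [(n, q), (nh, qh)]. fst (Q'!i) = fst ([(n, q), (nh, qh)]!i)"
      using eqv unfolding irr_equiv_def by (rule conjunct1[OF conjunct2])
    have fa: "fst a = n" using F[rule_format, of 0] ab by simp
    have fb: "fst b = nh" using F[rule_format, of 1] ab by simp
    have Q'eq: "Q' = [(n, snd a), (nh, snd b)]" using ab fa fb by (simp add: prod_eq_iff)
    have e': "is_efac (snd a)" "is_efac (snd b)" using wf ab unfolding wf_list_def by auto
    have bk: "distinct_orbits (snd a) (snd b) \<and> compatible (snd a) (snd b) \<and>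
                 levels (snd a) = levels q \<and> levels (snd b) = levels qh \<and>
                 levels (fst (common_part (snd a) (snd b))) = levels (fst (common_part q qh)) \<and>
                 fission (snd a) (snd b) = fission q qh"
      using backward[OF e e' dist comp eqv[unfolded Q'eq]] .
    show "\<exists>q' qh'. Q' = [(n, q'), (nh, qh')] \<and> is_efac q' \<and> is_efac qh' \<and>
                 distinct_orbits q' qh' \<and> compatible q' qh' \<and>
                 levels q' = levels q \<and> levels qh' = levels qh \<and>
                 levels (fst (common_part q' qh')) = levels (fst (common_part q qh)) \<and>
                 fission q' qh' = fission q qh"
      by (rule exI[of _ "snd a"], rule exI[of _ "snd b"], insert Q'eq e' bk, simp)
  next
    assume "\<exists>q' qh'. Q' = [(n, q'), (nh, qh')] \<and> is_efac q' \<and> is_efac qh' \<and>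
                 distinct_orbits q' qh' \<and> compatible q' qh' \<and>
                 levels q' = levels q \<and> levels qh' = levels qh \<and>
                 levels (fst (common_part q' qh')) = levels (fst (common_part q qh)) \<and>
                 fission q' qh' = fission q qh"
    then obtain q' qh' where h: "Q' = [(n, q'), (nh, qh')]" "is_efac q'" "is_efac qh'" "compatible q' qh'"
      "levels q' = levels q" "levels qh' = levels qh" "fission q' qh' = fission q qh" by auto
    show "irr_equiv Q' [(n, q), (nh, qh)]" unfolding h(1)
      using forward[OF e h(2,3) comp h(4-7)] .
  qed
  have part2: "(levels q' = levels q \<and> levels qh' = levels qh \<and>
              levels (fst (common_part q' qh')) = levels (fst (common_part q qh)) \<and>
              fission q' qh' = fission q qh)
             \<longleftrightarrow> (levels q' = levels q \<and> levels qh' = levels qh \<and> fission q' qh' = fission q qh)"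
    if "is_efac q'" "is_efac qh'" for q' qh'
    using levels_common[OF e] levels_common[OF that] by auto
  show ?thesis
    apply (intro conjI allI impI)
     apply (erule part1)
    apply (erule (1) part2)
    done
qed

end
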